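(* Let $G$ be a trigraph and $\varphi\in\operatorname{Aut}(G)$. Then there exists a partial contraction sequence of $G$ of width at most $4\Delta(G)$ whose last partition is the partition of $V(G)$ into the orbits of $\langle\varphi\rangle$, i.e., which contracts $G$ to $G/\langle\varphi\rangle$. In particular, $\operatorname{tww}(G)\leq\max\{4\Delta(G),\operatorname{tww}(G/\langle\varphi\rangle)\}$.
   Context: A trigraph is a finite simple graph whose edges are each colored red or black. $\operatorname{Aut}(G)$ is the automorphism group of the underlying simple graph of $G$ (automorphisms need not preserve edge colors); $\Delta(G)$ is the maximum degree (both colors). The red degree of a vertex is the number of red edges incident to it. For a partition $\mathcal{P}$ of $V(G)$, the quotient trigraph $G/\mathcal{P}$ has vertex set $\mathcal{P}$; two distinct parts $U,W$ are joined by a black edge if every pair $\{u,w\}$ with $u\in U,w\in W$ is a black edge of $G$, are non-adjacent if no such pair is an edge, and are joined by a red edge otherwise. For a group $\Gamma\subseteq\operatorname{Aut}(G)$, $G/\Gamma$ is the quotient by the partition into $\Gamma$-orbits. A contraction sequence of an $n$-vertex trigraph $G$ is a sequence $\mathcal{P}_n,\dots,\mathcal{P}_1$ of partitions of $V(G)$ where $\mathcal{P}_n$ is the partition into singletons and each $\mathcal{P}_i$ arises from $\mathcal{P}_{i+1}$ by merging two parts; a partial contraction sequence is a prefix $\mathcal{P}_n,\dots,\mathcal{P}_i$. The width is the maximum red degree over the trigraphs $G/\mathcal{P}_j$ in the sequence, and $\operatorname{tww}(G)$ is the minimum width of a (complete) contraction sequence. *)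

theory Defs
  imports Main
begin

text \<open>A trigraph on vertex type 'a: (V, B, R) = vertex set, black edges, red edges.
  Edges are 2-element subsets of V.\<close>
type_synonym 'a trigraph = "'a set \<times> 'a set set \<times> 'a set set"

definition verts :: "'a trigraph \<Rightarrow> 'a set" where "verts G = fst G"
definition black :: "'a trigraph \<Rightarrow> 'a set set" where "black G = fst (snd G)"
definition red :: "'a trigraph \<Rightarrow> 'a set set" where "red G = snd (snd G)"
definition edges :: "'a trigraph \<Rightarrow> 'a set set" where "edges G = black G \<union> red G"

definition trigraph :: "'a trigraph \<Rightarrow> bool" where
  "trigraph G \<longleftrightarrow> finite (verts G) \<and> black G \<inter> red G = {} \<and>
     (\<forall>e \<in> edges G. \<exists>u v. e = {u, v} \<and> u \<noteq> v \<and> u \<in> verts G \<and> v \<in> verts G)"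

text \<open>Automorphism of the underlying simple graph (colours need not be preserved).\<close>
definition is_aut :: "'a trigraph \<Rightarrow> ('a \<Rightarrow> 'a) \<Rightarrow> bool" where
  "is_aut G \<phi> \<longleftrightarrow> bij_betw \<phi> (verts G) (verts G) \<and>
     (\<forall>u \<in> verts G. \<forall>v \<in> verts G. {u, v} \<in> edges G \<longleftrightarrow> {\<phi> u, \<phi> v} \<in> edges G)"

definition degree :: "'a trigraph \<Rightarrow> 'a \<Rightarrow> nat" where
  "degree G v = card {w. {v, w} \<in> edges G}"

definition red_degree :: "'a trigraph \<Rightarrow> 'a \<Rightarrow> nat" where
  "red_degree G v = card {w. {v, w} \<in> red G}"

definition max_degree :: "'a trigraph \<Rightarrow> nat" where
  "max_degree G = Max (insert 0 (degree G ` verts G))"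

definition quotient :: "'a trigraph \<Rightarrow> 'a set set \<Rightarrow> 'a set trigraph" where
  "quotient G P =
    (P,
     {{U, W} | U W. U \<in> P \<and> W \<in> P \<and> U \<noteq> W \<and>
        (\<forall>u \<in> U. \<forall>w \<in> W. {u, w} \<in> black G)},
     {{U, W} | U W. U \<in> P \<and> W \<in> P \<and> U \<noteq> W \<and>
        (\<exists>u \<in> U. \<exists>w \<in> W. {u, w} \<in> edges G) \<and>
        \<not> (\<forall>u \<in> U. \<forall>w \<in> W. {u, w} \<in> black G)})"

definition singleton_partition :: "'a trigraph \<Rightarrow> 'a set set" where
  "singleton_partition G = {{v} | v. v \<in> verts G}"

definition merge_step :: "'a set set \<Rightarrow> 'a set set \<Rightarrow> bool" where
  "merge_step P P' \<longleftrightarrow> (\<exists>U \<in> P. \<exists>W \<in> P. U \<noteq> W \<and> P' = (P - {U, W}) \<union> {U \<union> W})"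

text \<open>A partial contraction sequence P_n, ..., P_i, as the list [P_n, ..., P_i].\<close>
definition partial_contraction_seq :: "'a trigraph \<Rightarrow> 'a set set list \<Rightarrow> bool" where
  "partial_contraction_seq G Ps \<longleftrightarrow> Ps \<noteq> [] \<and> hd Ps = singleton_partition G \<and>
     (\<forall>i. Suc i < length Ps \<longrightarrow> merge_step (Ps ! i) (Ps ! Suc i))"

definition contraction_seq :: "'a trigraph \<Rightarrow> 'a set set list \<Rightarrow> bool" where
  "contraction_seq G Ps \<longleftrightarrow> partial_contraction_seq G Ps \<and> card (last Ps) = 1"

definition width :: "'a trigraph \<Rightarrow> 'a set set list \<Rightarrow> nat" where
  "width G Ps = Max (insert 0 {red_degree (quotient G P) U | P U. P \<in> set Ps \<and> U \<in> P})"

definition tww :: "'a trigraph \<Rightarrow> nat" where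
  "tww G = Inf {width G Ps | Ps. contraction_seq G Ps}"

text \<open>Orbit of v under the cyclic group generated by \<phi> (for a permutation of a finite
  set, nonnegative powers suffice).\<close>
definition orbit_of :: "('a \<Rightarrow> 'a) \<Rightarrow> 'a \<Rightarrow> 'a set" where
  "orbit_of \<phi> v = {(\<phi> ^^ k) v | k. True}"

definition orbit_partition :: "'a trigraph \<Rightarrow> ('a \<Rightarrow> 'a) \<Rightarrow> 'a set set" where
  "orbit_partition G \<phi> = {orbit_of \<phi> v | v. v \<in> verts G}"

end

theory Submission
  imports Defs
begin

definition is_partition :: "'a set \<Rightarrow> 'a set set \<Rightarrow> bool" where
  "is_partition V P \<longleftrightarrow> (\<forall>U\<in>P. U \<noteq> {} \<and> U \<subseteq> V) \<and> \<Union>P = V \<and>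
     (\<forall>U\<in>P. \<forall>W\<in>P. U \<noteq> W \<longrightarrow> U \<inter> W = {})"

definition refines :: "'a set set \<Rightarrow> 'a set set \<Rightarrow> bool" where
  "refines P Q \<longleftrightarrow> (\<forall>U\<in>P. \<exists>B\<in>Q. U \<subseteq> B)"

definition chain :: "'a set set list \<Rightarrow> bool" where
  "chain Ps \<longleftrightarrow> (\<forall>i. Suc i < length Ps \<longrightarrow> merge_step (Ps ! i) (Ps ! Suc i))"

lemma chain_Cons2: "chain (x # y # xs) \<longleftrightarrow> merge_step x y \<and> chain (y # xs)"
  unfolding chain_def
proof (intro iffI conjI allI impI)
  fix i assume H: "\<forall>i. Suc i < length (x # y # xs) \<longrightarrow> merge_step ((x # y # xs) ! i) ((x # y # xs) ! Suc i)"
  show "merge_step x y" using H[rule_format, of 0] by simp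
  assume "Suc i < length (y # xs)"
  then show "merge_step ((y # xs) ! i) ((y # xs) ! Suc i)" using H[rule_format, of "Suc i"] by simp
next
  fix i assume H: "merge_step x y \<and> (\<forall>i. Suc i < length (y # xs) \<longrightarrow> merge_step ((y # xs) ! i) ((y # xs) ! Suc i))"
    and i: "Suc i < length (x # y # xs)"
  show "merge_step ((x # y # xs) ! i) ((x # y # xs) ! Suc i)"
  proof (cases i)
    case 0 then show ?thesis using H by simp
  next
    case (Suc j)
    have "Suc j < length (y # xs)" using i Suc by simp
    then show ?thesis using H[THEN conjunct2, rule_format, of j] Suc by simp
  qed
qed

lemma chain_succ: "chain Ps \<longleftrightarrow> successively merge_step Ps"
  by (induction Ps rule: induct_list012) (auto simp: chain_Cons2, auto simp: chain_def)

lemma chain_append: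
  assumes "chain Ps" "chain Qs" "Ps \<noteq> []" "Qs \<noteq> []" "last Ps = hd Qs"
  shows "chain (Ps @ tl Qs)"
proof -
  have e1: "Ps @ tl Qs = butlast Ps @ Qs" using assms(3-5)
    by (metis append_butlast_last_id append_Cons append_assoc list.collapse self_append_conv2)
  have sP: "successively merge_step (butlast Ps @ [last Ps])"
    using assms(1,3) unfolding chain_succ by simp
  have sQ: "successively merge_step Qs" using assms(2) unfolding chain_succ .
  have "successively merge_step (butlast Ps @ Qs)"
    using sP sQ assms(5) unfolding successively_append_iff by (simp, blast)
  then show ?thesis using e1 by (simp add: chain_succ)
qed

lemma partition_finite: "finite V \<Longrightarrow> is_partition V P \<Longrightarrow> finite P"
  unfolding is_partition_def by (metis Pow_iff finite_Pow_iff finite_subset subsetI)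

lemma merge_partition:
  assumes "is_partition V P" "U \<in> P" "W \<in> P" "U \<noteq> W"
  shows "is_partition V ((P - {U, W}) \<union> {U \<union> W})"
proof -
  have p: "\<forall>U\<in>P. U \<noteq> {} \<and> U \<subseteq> V" "\<Union>P = V" "\<forall>U\<in>P. \<forall>W\<in>P. U \<noteq> W \<longrightarrow> U \<inter> W = {}"
    using assms(1) unfolding is_partition_def by auto
  let ?P = "(P - {U, W}) \<union> {U \<union> W}"
  have "\<forall>X\<in>?P. X \<noteq> {} \<and> X \<subseteq> V" using p(1) assms(2,3) by auto
  moreover have "\<Union>?P = V" using p(2) assms(2,3) by auto
  moreover have "\<forall>X\<in>?P. \<forall>Y\<in>?P. X \<noteq> Y \<longrightarrow> X \<inter> Y = {}"
  proof (intro ballI impI)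
    fix X Y assume X: "X \<in> ?P" and Y: "Y \<in> ?P" and XY: "X \<noteq> Y"
    show "X \<inter> Y = {}"
    proof (cases "X = U \<union> W")
      case True
      then have "Y \<in> P" "Y \<noteq> U" "Y \<noteq> W" using Y XY by auto
      then show ?thesis using True p(3) assms(2,3) by blast
    next
      case False
      then have X': "X \<in> P" "X \<noteq> U" "X \<noteq> W" using X by auto
      show ?thesis
      proof (cases "Y = U \<union> W")
        case True
        then show ?thesis using X' p(3) assms(2,3) by blast
      next
        case False
        then have "Y \<in> P" using Y by auto
        then show ?thesis using X' XY p(3) by blast
      qed
    qed
  qed
  ultimately show ?thesis unfolding is_partition_def by blast
qed

lemma refines_trans: "refines P Q \<Longrightarrow> refines Q R \<Longrightarrow> refines P R"
  unfolding refines_def by (meson order_trans)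

lemma refines_refl: "refines P P"
  unfolding refines_def by blast

lemma partition_part_unique:
  "is_partition V P \<Longrightarrow> U \<in> P \<Longrightarrow> W \<in> P \<Longrightarrow> x \<in> U \<Longrightarrow> x \<in> W \<Longrightarrow> U = W"
  unfolding is_partition_def by blast

lemma part_ne: "is_partition V P \<Longrightarrow> U \<in> P \<Longrightarrow> U \<noteq> {}"
  unfolding is_partition_def by simp
lemma part_sub: "is_partition V P \<Longrightarrow> U \<in> P \<Longrightarrow> U \<subseteq> V"
  unfolding is_partition_def by simp
lemma part_cover: "is_partition V P \<Longrightarrow> x \<in> V \<Longrightarrow> \<exists>U\<in>P. x \<in> U"
  unfolding is_partition_def by (metis UnionE)

lemma refines_eq:
  assumes "is_partition V P" "is_partition V Q" "refines P Q"
    and one: "\<forall>B\<in>Q. \<forall>U\<in>P. \<forall>W\<in>P. U \<subseteq> B \<longrightarrow> W \<subseteq> B \<longrightarrow> U = W"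
  shows "P = Q"
proof -
  have A: "U \<in> Q" if hU: "U \<in> P" for U
  proof -
    have "\<exists>B\<in>Q. U \<subseteq> B" using assms(3) hU unfolding refines_def by (rule bspec)
    then obtain B where B: "B \<in> Q" "U \<subseteq> B" by (rule bexE)
    have "B \<subseteq> U"
    proof
      fix b assume b: "b \<in> B"
      then have "b \<in> V" using part_sub[OF assms(2) B(1)] by (rule subsetD[rotated])
      then have "\<exists>U'\<in>P. b \<in> U'" by (rule part_cover[OF assms(1)])
      then obtain U' where U': "U' \<in> P" "b \<in> U'" by (rule bexE)
      then obtain B' where B': "B' \<in> Q" "U' \<subseteq> B'" using assms(3) unfolding refines_def by blast
      have "b \<in> B'" using B' U' by blast
      then have "B' = B" using partition_part_unique[OF assms(2) B'(1) B(1) _ b] by simp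
      then have "U' \<subseteq> B" using B' by simp
      then have "U = U'" using one[rule_format, OF B(1) hU U'(1) B(2)] by simp
      then show "b \<in> U" using U' by simp
    qed
    then have "B = U" using B(2) by (rule subset_antisym)
    then show ?thesis using B(1) by simp
  qed
  moreover have "B \<in> P" if hB: "B \<in> Q" for B
  proof -
    obtain b where b: "b \<in> B" using part_ne[OF assms(2) hB] by blast
    then have "b \<in> V" using part_sub[OF assms(2) hB] by blast
    then obtain U where U: "U \<in> P" "b \<in> U" using part_cover[OF assms(1)] by blast
    then have "U \<in> Q" using A by blast
    then have "U = B" using partition_part_unique[OF assms(2) _ hB U(2) b] by simp
    then show ?thesis using U by simp
  qed
  ultimately show ?thesis by (intro set_eqI iffI)
qed

lemma merge_path:
  assumes "finite V" "is_partition V P" "is_partition V Q" "refines P Q"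
  shows "\<exists>Ps. Ps \<noteq> [] \<and> hd Ps = P \<and> last Ps = Q \<and> chain Ps \<and>
     (\<forall>R\<in>set Ps. is_partition V R \<and> refines P R \<and> refines R Q)"
  using assms(2-4)
proof (induction "card P" arbitrary: P rule: less_induct)
  case less
  show ?case
  proof (cases "P = Q")
    case True
    have "chain [P]" by (simp add: chain_def)
    then show ?thesis using less.prems True by (intro exI[of _ "[P]"]) (simp add: refines_refl)
  next
    case False
    have "\<not> (\<forall>B\<in>Q. \<forall>U\<in>P. \<forall>W\<in>P. U \<subseteq> B \<longrightarrow> W \<subseteq> B \<longrightarrow> U = W)"
    proof
      assume "\<forall>B\<in>Q. \<forall>U\<in>P. \<forall>W\<in>P. U \<subseteq> B \<longrightarrow> W \<subseteq> B \<longrightarrow> U = W"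
      then have "P = Q" by (rule refines_eq[OF less.prems])
      then show False using False by simp
    qed
    then obtain B U W where BUW: "B \<in> Q" "U \<in> P" "W \<in> P" "U \<subseteq> B" "W \<subseteq> B" "U \<noteq> W"
      by auto
    define P' where "P' = (P - {U, W}) \<union> {U \<union> W}"
    have pP': "is_partition V P'" unfolding P'_def by (rule merge_partition[OF less.prems(1) BUW(2,3,6)])
    have fin: "finite P" using partition_finite[OF assms(1) less.prems(1)] .
    have "U \<noteq> {}" by (rule part_ne[OF less.prems(1) BUW(2)])
    then obtain x where x: "x \<in> U" by auto
    have nin: "U \<union> W \<notin> P - {U, W}"
    proof
      assume H: "U \<union> W \<in> P - {U, W}"
      then have "U \<union> W \<in> P" by simp
      moreover have "x \<in> U \<union> W" using x by simp
      ultimately have "U = U \<union> W" by (rule partition_part_unique[OF less.prems(1) BUW(2) _ x])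
      then show False using H by simp
    qed
    have c2: "card {U, W} = 2" using BUW by simp
    have sub: "{U, W} \<subseteq> P" using BUW by simp
    have "card P' = card (P - {U, W}) + 1" unfolding P'_def
      using nin fin by simp
    moreover have "card (P - {U, W}) = card P - 2" using card_Diff_subset[OF _ sub] c2 by simp
    moreover have "card P \<ge> 2" using card_mono[OF fin sub] c2 by simp
    ultimately have lt: "card P' < card P" by simp
    have r1: "refines P P'" unfolding refines_def
    proof
      fix X assume X: "X \<in> P"
      show "\<exists>B\<in>P'. X \<subseteq> B"
      proof (cases "X = U \<or> X = W")
        case True
        then show ?thesis unfolding P'_def by blast
      next
        case False
        then have "X \<in> P'" using X unfolding P'_def by blast
        then show ?thesis by blast
      qed
    qed
    have r2: "refines P' Q" unfolding refines_def
    proof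
      fix X assume "X \<in> P'"
      then have "X = U \<union> W \<or> X \<in> P" unfolding P'_def by blast
      then show "\<exists>B\<in>Q. X \<subseteq> B"
      proof
        assume "X = U \<union> W" then show ?thesis using BUW by blast
      next
        assume "X \<in> P" then show ?thesis using less.prems(3) unfolding refines_def by blast
      qed
    qed
    obtain Ps where Ps: "Ps \<noteq> []" "hd Ps = P'" "last Ps = Q" "chain Ps"
      "\<forall>R\<in>set Ps. is_partition V R \<and> refines P' R \<and> refines R Q"
      using less.hyps[OF lt pP' less.prems(2) r2] by blast
    have ms: "merge_step P P'" unfolding merge_step_def
    proof (rule bexI[OF bexI[OF _ BUW(3)] BUW(2)])
      show "U \<noteq> W \<and> P' = (P - {U, W}) \<union> {U \<union> W}" using BUW(6) P'_def by simp
    qed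
    have "successively merge_step (P # Ps)" using Ps(1,2,4) ms unfolding chain_succ
      by (cases Ps) auto
    then have ch: "chain (P # Ps)" unfolding chain_succ .
    have all: "\<forall>R\<in>set (P # Ps). is_partition V R \<and> refines P R \<and> refines R Q"
    proof
      fix R assume "R \<in> set (P # Ps)"
      then have "R = P \<or> R \<in> set Ps" by simp
      then show "is_partition V R \<and> refines P R \<and> refines R Q"
      proof
        assume "R = P" then show ?thesis using less.prems refines_refl by simp
      next
        assume "R \<in> set Ps"
        then have "is_partition V R" "refines P' R" "refines R Q" using Ps(5) by auto
        then show ?thesis using refines_trans[OF r1] by blast
      qed
    qed
    show ?thesis using Ps(1,3) ch all by (intro exI[of _ "P # Ps"]) simp
  qed
qed

locale permV =
  fixes V :: "'a set" and f :: "'a \<Rightarrow> 'a"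
  assumes finV: "finite V" and bijf: "bij_betw f V V"
begin

lemma bijn: "bij_betw (f ^^ n) V V"
  by (rule bij_betw_funpow[OF bijf])

lemma fin: "v \<in> V \<Longrightarrow> (f ^^ n) v \<in> V"
  using bijn[of n] unfolding bij_betw_def by blast

lemma injn: "x \<in> V \<Longrightarrow> y \<in> V \<Longrightarrow> (f ^^ n) x = (f ^^ n) y \<Longrightarrow> x = y"
  using bijn[of n] unfolding bij_betw_def inj_on_def by blast

lemma surjn: "w \<in> V \<Longrightarrow> \<exists>x\<in>V. (f ^^ n) x = w"
  using bijn[of n] unfolding bij_betw_def by (metis imageE)

lemma funpow_split: "(f ^^ (a + b)) v = (f ^^ a) ((f ^^ b) v)"
  by (simp add: funpow_add)

lemma cancel_lt:
  assumes "v \<in> V" "a < b" "(f ^^ a) v = (f ^^ b) v"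
  shows "(f ^^ (b - a)) v = v"
proof -
  have "(f ^^ b) v = (f ^^ a) ((f ^^ (b - a)) v)" using assms(2) funpow_split[of a "b - a" v] by simp
  then have "(f ^^ a) ((f ^^ (b - a)) v) = (f ^^ a) v" using assms(3) by simp
  then show ?thesis using injn fin assms(1) by blast
qed

lemma per_ex: assumes "v \<in> V" shows "\<exists>n. 0 < n \<and> (f ^^ n) v = v"
proof -
  let ?g = "\<lambda>n. (f ^^ n) v"
  have "?g ` {..card V} \<subseteq> V" using fin assms by blast
  then have "\<not> inj_on ?g {..card V}" using card_inj_on_le[of ?g "{..card V}" V] finV by auto
  then obtain a b where ab: "a \<noteq> b" "?g a = ?g b" unfolding inj_on_def by blast
  show ?thesis
  proof (cases "a < b")
    case True
    then show ?thesis using cancel_lt[OF assms True] ab by (intro exI[of _ "b - a"]) simp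
  next
    case False
    then have "b < a" using ab(1) by simp
    then show ?thesis using cancel_lt[OF assms \<open>b < a\<close>] ab by (intro exI[of _ "a - b"]) simp
  qed
qed

definition per :: "'a \<Rightarrow> nat" where "per v = (LEAST n. 0 < n \<and> (f ^^ n) v = v)"

lemma per: assumes "v \<in> V" shows "0 < per v" "(f ^^ per v) v = v"
  using LeastI_ex[OF per_ex[OF assms]] unfolding per_def by auto

lemma per_min: "0 < n \<Longrightarrow> n < per v \<Longrightarrow> (f ^^ n) v \<noteq> v"
  unfolding per_def using not_less_Least by blast

lemma per_mult: assumes "v \<in> V" shows "(f ^^ (q * per v)) v = v"
proof (induction q)
  case (Suc q)
  have "(f ^^ (Suc q * per v)) v = (f ^^ (q * per v)) ((f ^^ per v) v)"
    using funpow_split[of "q * per v" "per v" v] by (simp add: add.commute)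
  then show ?case using Suc per(2)[OF assms] by simp
qed simp

lemma funpow_mod: assumes "v \<in> V" shows "(f ^^ n) v = (f ^^ (n mod per v)) v"
proof -
  have "n = n mod per v + (n div per v) * per v" using mod_div_mult_eq[of n "per v"] by simp
  then have "(f ^^ n) v = (f ^^ (n mod per v)) ((f ^^ ((n div per v) * per v)) v)"
    by (metis funpow_split)
  then show ?thesis using per_mult[OF assms] by simp
qed

lemma funpow_inj_lt:
  assumes "v \<in> V" "a < per v" "b < per v" "(f ^^ a) v = (f ^^ b) v"
  shows "a = b"
proof (rule ccontr)
  assume "a \<noteq> b"
  then consider "a < b" | "b < a" by linarith
  then show False
  proof cases
    case 1
    then show False using cancel_lt[OF assms(1) 1 assms(4)] per_min[of "b - a" v] assms by simp
  next
    case 2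
    then show False using cancel_lt[OF assms(1) 2 assms(4)[symmetric]] per_min[of "a - b" v] assms by simp
  qed
qed

lemma orb_mem: "x \<in> orbit_of f v \<longleftrightarrow> (\<exists>k. (f ^^ k) v = x)"
  unfolding orbit_of_def by auto

lemma orb_self: "v \<in> orbit_of f v"
  unfolding orbit_of_def by (metis (mono_tags, lifting) funpow_0 mem_Collect_eq)

lemma orb_sub: "v \<in> V \<Longrightarrow> orbit_of f v \<subseteq> V"
  unfolding orbit_of_def using fin by blast

lemma orb_mono: assumes "w \<in> orbit_of f v" shows "orbit_of f w \<subseteq> orbit_of f v"
proof
  fix x assume "x \<in> orbit_of f w"
  then obtain b where b: "x = (f ^^ b) w" unfolding orbit_of_def by blast
  obtain a where a: "w = (f ^^ a) v" using assms unfolding orbit_of_def by blast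
  have "x = (f ^^ (b + a)) v" using a b funpow_split by simp
  then show "x \<in> orbit_of f v" unfolding orbit_of_def by blast
qed

lemma orb_back: assumes "v \<in> V" "w \<in> orbit_of f v" shows "v \<in> orbit_of f w"
proof -
  obtain a where a: "w = (f ^^ a) v" using assms unfolding orbit_of_def by blast
  let ?p = "per v"
  have e: "a mod ?p + ?p * (a div ?p) = a" by (rule mod_mult_div_eq)
  have lt: "a mod ?p < ?p" using mod_less_divisor[OF per(1)[OF assms(1)], of a] .
  have "?p - a mod ?p + a = ?p + ?p * (a div ?p)" using e lt by linarith
  also have "\<dots> = ?p * (1 + a div ?p)" by (simp add: distrib_left)
  finally have "?p - a mod ?p + a = ?p * (1 + a div ?p)" .
  then have "(?p - a mod ?p + a) mod ?p = 0" by simp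
  then have "(f ^^ (?p - a mod ?p + a)) v = v" using funpow_mod[OF assms(1)] by (metis funpow_0)
  then have "(f ^^ (?p - a mod ?p)) w = v" using a funpow_split by metis
  then show ?thesis unfolding orb_mem by blast
qed

lemma orb_eq: "v \<in> V \<Longrightarrow> w \<in> orbit_of f v \<Longrightarrow> orbit_of f w = orbit_of f v"
  using orb_mono orb_back by (meson subset_antisym)

definition rep :: "'a \<Rightarrow> 'a" where "rep v = (SOME x. x \<in> orbit_of f v)"

lemma rep_in: "rep v \<in> orbit_of f v"
  unfolding rep_def using orb_self by (rule someI)

lemma rep_V: "v \<in> V \<Longrightarrow> rep v \<in> V"
  using rep_in orb_sub by blast

lemma orb_rep: "v \<in> V \<Longrightarrow> orbit_of f (rep v) = orbit_of f v"
  using orb_eq rep_in by blast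

lemma in_orb_rep: "v \<in> V \<Longrightarrow> v \<in> orbit_of f (rep v)"
  using orb_rep orb_self by blast

lemma rep_orb: "v \<in> V \<Longrightarrow> w \<in> orbit_of f v \<Longrightarrow> rep w = rep v"
  unfolding rep_def using orb_eq by simp

lemma rep_eq_orb: "v \<in> V \<Longrightarrow> w \<in> V \<Longrightarrow> rep w = rep v \<Longrightarrow> w \<in> orbit_of f v"
  using in_orb_rep orb_rep by metis

lemma rep_shift: "v \<in> V \<Longrightarrow> rep ((f ^^ i) v) = rep v"
  using rep_orb unfolding orbit_of_def by blast

definition idx :: "'a \<Rightarrow> nat" where "idx v = (LEAST i. (f ^^ i) (rep v) = v)"

lemma idx: assumes "v \<in> V" shows "(f ^^ idx v) (rep v) = v" "idx v < per (rep v)"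
proof -
  obtain k where k: "(f ^^ k) (rep v) = v" using in_orb_rep[OF assms] unfolding orb_mem by blast
  show 1: "(f ^^ idx v) (rep v) = v" unfolding idx_def using k by (rule LeastI)
  have "(f ^^ (k mod per (rep v))) (rep v) = v" using k funpow_mod[OF rep_V[OF assms]] by simp
  then have "idx v \<le> k mod per (rep v)" unfolding idx_def by (rule Least_le)
  also have "\<dots> < per (rep v)" using per(1)[OF rep_V[OF assms]] by simp
  finally show "idx v < per (rep v)" .
qed

lemma idx_unique: assumes "v \<in> V" "i < per (rep v)" "(f ^^ i) (rep v) = v" shows "idx v = i"
  using funpow_inj_lt[OF rep_V[OF assms(1)] idx(2)[OF assms(1)] assms(2)] idx(1)[OF assms(1)] assms(3)
  by simp

lemma idx_shift: assumes "v \<in> V"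
  shows "idx ((f ^^ i) v) = (idx v + i) mod per (rep v)"
proof -
  let ?w = "(f ^^ i) v"
  have w: "?w \<in> V" using fin assms .
  have r: "rep ?w = rep v" using rep_shift assms .
  have "(f ^^ ((idx v + i) mod per (rep v))) (rep v) = (f ^^ (i + idx v)) (rep v)"
    using funpow_mod[OF rep_V[OF assms], of "i + idx v"] by (simp add: add.commute)
  also have "\<dots> = ?w" using funpow_split[of i "idx v" "rep v"] idx(1)[OF assms] by simp
  finally have e: "(f ^^ ((idx v + i) mod per (rep v))) (rep ?w) = ?w" using r by simp
  have "(idx v + i) mod per (rep v) < per (rep ?w)" using r per(1)[OF rep_V[OF assms]] by simp
  then show ?thesis using idx_unique[OF w _ e] by simp
qed

lemma idx_rep_eq: assumes "v \<in> V" "w \<in> V" "rep w = rep v" "idx w = idx v" shows "w = v"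
  using idx(1)[OF assms(1)] idx(1)[OF assms(2)] assms(3,4) by metis

end

lemma card4: "card {a, b, c, d :: nat} \<le> 4"
  using card_length[of "[a, b, c, d]"] by simp

lemma arith4:
  assumes L: "0 < (L::nat)" and K: "0 < K" and s: "s < K"
  shows "card {((s + i) mod K) div L | i. i < 2 * L} \<le> 4"
proof -
  let ?S = "{((s + i) mod K) div L | i. i < 2 * L}"
  let ?q = "s div L"
  have q2: "(s + 2 * L) div L = ?q + 2" using L by simp
  have q1: "(s + L) div L = ?q + 1" using L by (simp add: div_add_self2)
  define T where "T = (if K \<le> 2 * L then {0, 1} else if L \<le> K - s then {?q, ?q + 1, ?q + 2, 0} else {?q, ?q + 1, 0, 1})"
  have cT: "card T \<le> 4" unfolding T_def using card4 by (simp add: card_insert_le)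
  have sub: "?S \<subseteq> T"
  proof
    fix x assume "x \<in> ?S"
    then obtain i where i: "i < 2 * L" and x: "x = ((s + i) mod K) div L" by blast
    show "x \<in> T"
    proof (cases "K \<le> 2 * L")
      case True
      have "(s + i) mod K < 2 * L" using True K by (meson mod_less_divisor order_less_le_trans)
      then have "x < 2" unfolding x using L by (simp add: div_less_iff_less_mult)
      then show ?thesis unfolding T_def using True by auto
    next
      case False
      have lo: "?q \<le> (s + i) div L" by (simp add: div_le_mono)
      show ?thesis
      proof (cases "s + i < K")
        case True
        then have x': "x = (s + i) div L" unfolding x by simp
        have "(s + i) div L \<le> ?q + 2" using div_le_mono[of "s + i" "s + 2 * L" L] i q2 by simp
        moreover have "(s + i) div L \<le> ?q + 1 \<or> L \<le> K - s"
        proof (rule disjCI)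
          assume "\<not> L \<le> K - s"
          then have "s + i \<le> s + L" using True by linarith
          then show "(s + i) div L \<le> ?q + 1" using div_le_mono[of "s + i" "s + L" L] q1 by simp
        qed
        ultimately show ?thesis unfolding T_def using False lo x' by auto
      next
        case ge: False
        have "s + i - K < K" using i False s by linarith
        then have m: "(s + i) mod K = s + i - K" using ge by (simp add: le_mod_geq)
        show ?thesis
        proof (cases "L \<le> K - s")
          case True
          then have "s + i - K < L" using i s by linarith
          then have "x = 0" unfolding x m by simp
          then show ?thesis unfolding T_def using True False by auto
        next
          case False2: False
          have "s + i - K < 2 * L" using i s by linarith
          then have "x < 2" unfolding x m using L by (simp add: div_less_iff_less_mult)
          then show ?thesis unfolding T_def using False2 False by auto
        qed
      qed
    qed
  qed
  have "finite T" unfolding T_def by simp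
  then have "card ?S \<le> card T" using sub by (rule card_mono)
  then show ?thesis using cT by simp
qed

context permV
begin

definition blk :: "nat \<Rightarrow> 'a \<Rightarrow> 'a set" where
  "blk j v = {w \<in> V. rep w = rep v \<and> idx w div 2 ^ j = idx v div 2 ^ j}"

definition lvl :: "nat \<Rightarrow> 'a set set" where "lvl j = blk j ` V"

lemma blk_self: "v \<in> V \<Longrightarrow> v \<in> blk j v"
  unfolding blk_def by simp

lemma blk_sub: "blk j v \<subseteq> V"
  unfolding blk_def by blast

lemma blk_eq: "w \<in> blk j v \<Longrightarrow> blk j w = blk j v"
  unfolding blk_def by auto

lemma lvl_part: "is_partition V (lvl j)"
  unfolding is_partition_def lvl_def
proof (intro conjI ballI impI)
  fix U assume "U \<in> blk j ` V"
  then obtain v where "v \<in> V" "U = blk j v" by blast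
  then show "U \<noteq> {}" "U \<subseteq> V" using blk_self[of v j] blk_sub[of j v] by auto
next
  show "\<Union> (blk j ` V) = V" using blk_self blk_sub by blast
next
  fix U W assume "U \<in> blk j ` V" "W \<in> blk j ` V" "U \<noteq> W"
  then show "U \<inter> W = {}" using blk_eq by blast
qed

lemma blk_mono: "blk j v \<subseteq> blk (Suc j) v"
proof
  fix w assume "w \<in> blk j v"
  then have w: "w \<in> V" "rep w = rep v" "idx w div 2 ^ j = idx v div 2 ^ j" unfolding blk_def by auto
  have "idx w div 2 ^ Suc j = idx w div 2 ^ j div 2" by (metis div_mult2_eq power_Suc2)
  moreover have "idx v div 2 ^ Suc j = idx v div 2 ^ j div 2" by (metis div_mult2_eq power_Suc2)
  ultimately show "w \<in> blk (Suc j) v" unfolding blk_def using w by simp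
qed

lemma lvl_ref: "refines (lvl j) (lvl (Suc j))"
  unfolding refines_def lvl_def using blk_mono by blast

lemma lvl0: "lvl 0 = {{v} | v. v \<in> V}"
proof -
  have "blk 0 v = {v}" if "v \<in> V" for v
  proof
    show "blk 0 v \<subseteq> {v}"
    proof
      fix w assume "w \<in> blk 0 v"
      then have "w \<in> V" "rep w = rep v" "idx w = idx v" unfolding blk_def by auto
      then show "w \<in> {v}" using idx_rep_eq[OF that] by simp
    qed
    show "{v} \<subseteq> blk 0 v" using blk_self[OF that] by simp
  qed
  then show ?thesis unfolding lvl_def by auto
qed

lemma lvlJ: assumes "\<forall>v\<in>V. idx v < 2 ^ J" shows "lvl J = {orbit_of f v | v. v \<in> V}"
proof -
  have "blk J v = orbit_of f v" if v: "v \<in> V" for v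
  proof
    show "blk J v \<subseteq> orbit_of f v"
    proof
      fix w assume "w \<in> blk J v"
      then have "w \<in> V" "rep w = rep v" unfolding blk_def by auto
      then show "w \<in> orbit_of f v" using rep_eq_orb[OF v] by simp
    qed
    show "orbit_of f v \<subseteq> blk J v"
    proof
      fix w assume w: "w \<in> orbit_of f v"
      then have wV: "w \<in> V" using orb_sub[OF v] by blast
      have "rep w = rep v" using rep_orb[OF v w] .
      moreover have "idx w div 2 ^ J = 0" "idx v div 2 ^ J = 0" using assms wV v by simp_all
      ultimately show "w \<in> blk J v" unfolding blk_def using wV by simp
    qed
  qed
  then show ?thesis unfolding lvl_def by auto
qed

lemma same_blk_part:
  assumes "is_partition V R" "refines (lvl j) R" "x \<in> V" "y \<in> V" "rep x = rep y"
    "idx x div 2 ^ j = idx y div 2 ^ j"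
  shows "\<exists>U\<in>R. x \<in> U \<and> y \<in> U"
proof -
  have "blk j x \<in> lvl j" unfolding lvl_def using assms(3) by simp
  then obtain U where U: "U \<in> R" "blk j x \<subseteq> U" using assms(2) unfolding refines_def by blast
  have "x \<in> blk j x" "y \<in> blk j x" using assms(3-6) unfolding blk_def by auto
  then show ?thesis using U by blast
qed

end

locale autG =
  fixes G :: "'a trigraph" and f :: "'a \<Rightarrow> 'a"
  assumes trig: "trigraph G" and aut: "is_aut G f"

sublocale autG \<subseteq> permV "verts G" f
  using trig aut unfolding trigraph_def is_aut_def by unfold_locales auto

context autG
begin

lemma edge_in: assumes "{u, w} \<in> edges G" shows "u \<in> verts G" "w \<in> verts G"
proof -
  obtain x y where "{u, w} = {x, y}" "x \<in> verts G" "y \<in> verts G"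
    using trig assms unfolding trigraph_def by blast
  then show "u \<in> verts G" "w \<in> verts G" by (auto simp: doubleton_eq_iff)
qed

lemma edge_shift: "u \<in> verts G \<Longrightarrow> w \<in> verts G \<Longrightarrow>
   {(f ^^ i) u, (f ^^ i) w} \<in> edges G \<longleftrightarrow> {u, w} \<in> edges G"
proof (induction i)
  case (Suc i)
  have "(f ^^ i) u \<in> verts G" "(f ^^ i) w \<in> verts G" using Suc.prems fin by auto
  then have "{f ((f ^^ i) u), f ((f ^^ i) w)} \<in> edges G \<longleftrightarrow> {(f ^^ i) u, (f ^^ i) w} \<in> edges G"
    using aut unfolding is_aut_def by blast
  then show ?case using Suc by simp
qed simp

definition nbr :: "'a \<Rightarrow> 'a set" where "nbr a = {w. {a, w} \<in> edges G}"

lemma nbr_sub: "nbr a \<subseteq> verts G"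
  unfolding nbr_def using edge_in by blast

lemma nbr_fin: "finite (nbr a)"
  using nbr_sub finV finite_subset by blast

lemma nbr_card: assumes "a \<in> verts G" shows "card (nbr a) \<le> max_degree G"
proof -
  have "card (nbr a) = degree G a" unfolding nbr_def degree_def ..
  also have "\<dots> \<le> Max (insert 0 (degree G ` verts G))"
    using assms finV by (intro Max_ge) auto
  finally show ?thesis unfolding max_degree_def .
qed

lemma red_quot: assumes "W \<in> {W. {U, W} \<in> red (quotient G R)}"
  shows "W \<in> R \<and> (\<exists>u\<in>U. \<exists>w\<in>W. {u, w} \<in> edges G)"
proof -
  from assms obtain U' W' where e: "{U, W} = {U', W'}" "U' \<in> R" "W' \<in> R"
    "\<exists>u\<in>U'. \<exists>w\<in>W'. {u, w} \<in> edges G"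
    unfolding red_def quotient_def by auto
  from e(1) have "(U = U' \<and> W = W') \<or> (U = W' \<and> W = U')" by (auto simp: doubleton_eq_iff)
  then show ?thesis
  proof
    assume "U = U' \<and> W = W'" then show ?thesis using e by blast
  next
    assume h: "U = W' \<and> W = U'"
    then have "W \<in> R" using e by simp
    moreover from e(4) obtain u w where "u \<in> U'" "w \<in> W'" "{u, w} \<in> edges G" by blast
    then have "w \<in> U" "u \<in> W" "{w, u} \<in> edges G" using h by (auto simp: insert_commute)
    ultimately show ?thesis by blast
  qed
qed

lemma T_card:
  assumes R: "is_partition (verts G) R" "refines (lvl j) R" and w: "w \<in> verts G"
  shows "card {W \<in> R. \<exists>i<2 * 2 ^ j. (f ^^ i) w \<in> W} \<le> 4"
proof -
  let ?L = "(2::nat) ^ j"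
  let ?T = "{W \<in> R. \<exists>i<2 * ?L. (f ^^ i) w \<in> W}"
  let ?K = "per (rep w)"
  let ?S = "{((idx w + i) mod ?K) div ?L | i. i < 2 * ?L}"
  define g where "g W = (SOME b. \<exists>i<2 * ?L. (f ^^ i) w \<in> W \<and> b = idx ((f ^^ i) w) div ?L)" for W
  have gS: "g W \<in> ?S \<and> (\<exists>i<2 * ?L. (f ^^ i) w \<in> W \<and> g W = idx ((f ^^ i) w) div ?L)" if "W \<in> ?T" for W
  proof -
    from that obtain i where i: "i < 2 * ?L" "(f ^^ i) w \<in> W" by blast
    then have "\<exists>b. \<exists>i<2 * ?L. (f ^^ i) w \<in> W \<and> b = idx ((f ^^ i) w) div ?L" by blast
    then have "\<exists>i<2 * ?L. (f ^^ i) w \<in> W \<and> g W = idx ((f ^^ i) w) div ?L"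
      unfolding g_def by (rule someI_ex)
    then obtain i' where i': "i' < 2 * ?L" "(f ^^ i') w \<in> W" "g W = idx ((f ^^ i') w) div ?L" by blast
    then have "g W = ((idx w + i') mod ?K) div ?L" using idx_shift[OF w] by simp
    then have "g W \<in> ?S" using i'(1) by blast
    then show ?thesis using i' by blast
  qed
  have inj: "inj_on g ?T"
  proof (rule inj_onI)
    fix W1 W2 assume W1: "W1 \<in> ?T" and W2: "W2 \<in> ?T" and eq: "g W1 = g W2"
    obtain i1 where i1: "(f ^^ i1) w \<in> W1" "g W1 = idx ((f ^^ i1) w) div ?L" using gS[OF W1] by blast
    obtain i2 where i2: "(f ^^ i2) w \<in> W2" "g W2 = idx ((f ^^ i2) w) div ?L" using gS[OF W2] by blast
    have "\<exists>U\<in>R. (f ^^ i1) w \<in> U \<and> (f ^^ i2) w \<in> U"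
      by (rule same_blk_part[OF R, of "(f ^^ i1) w" "(f ^^ i2) w"])
        (use fin[OF w] rep_shift[OF w] i1 i2 eq in auto)
    then obtain U where U: "U \<in> R" "(f ^^ i1) w \<in> U" "(f ^^ i2) w \<in> U" by blast
    have "W1 = U" using partition_part_unique[OF R(1) _ U(1) i1(1) U(2)] W1 by simp
    moreover have "W2 = U" using partition_part_unique[OF R(1) _ U(1) i2(1) U(3)] W2 by simp
    ultimately show "W1 = W2" by simp
  qed
  have fS: "finite ?S"
  proof -
    have "?S = (\<lambda>i. ((idx w + i) mod ?K) div ?L) ` {..<2 * ?L}" by auto
    then show ?thesis by simp
  qed
  have "card ?T \<le> card ?S" using card_inj_on_le[OF inj _ fS] gS by blast
  also have "\<dots> \<le> 4"
    by (rule arith4) (use per(1)[OF rep_V[OF w]] idx(2)[OF w] in auto)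
  finally show ?thesis .
qed

lemma red_bound:
  assumes R: "is_partition (verts G) R" "refines (lvl j) R" "refines R (lvl (Suc j))" and U: "U \<in> R"
  shows "red_degree (quotient G R) U \<le> 4 * max_degree G"
proof -
  let ?L = "(2::nat) ^ j"
  obtain v where v: "v \<in> verts G" "U \<subseteq> blk (Suc j) v"
    using R(3) U unfolding refines_def lvl_def by blast
  define m where "m = idx v div (2 * ?L)"
  define a0 where "a0 = (f ^^ (m * (2 * ?L))) (rep v)"
  have a0V: "a0 \<in> verts G" unfolding a0_def using fin rep_V[OF v(1)] by blast
  have Uform: "\<exists>i<2 * ?L. u = (f ^^ i) a0" if u: "u \<in> U" for u
  proof -
    have "u \<in> blk (Suc j) v" using u v by blast
    then have uV: "u \<in> verts G" and r: "rep u = rep v" and d: "idx u div (2 * ?L) = m"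
      unfolding blk_def m_def by auto
    define i where "i = idx u mod (2 * ?L)"
    have "idx u = i + m * (2 * ?L)" unfolding i_def using d mod_div_mult_eq[of "idx u" "2 * ?L"] by simp
    then have "u = (f ^^ (i + m * (2 * ?L))) (rep v)" using idx(1)[OF uV] r by simp
    then have "u = (f ^^ i) a0" unfolding a0_def by (simp add: funpow_split)
    moreover have "i < 2 * ?L" unfolding i_def by simp
    ultimately show ?thesis by blast
  qed
  let ?T = "\<lambda>w. {W \<in> R. \<exists>i<2 * ?L. (f ^^ i) w \<in> W}"
  let ?NB = "{W. {U, W} \<in> red (quotient G R)}"
  have sub: "?NB \<subseteq> (\<Union>w\<in>nbr a0. ?T w)"
  proof
    fix W assume "W \<in> ?NB"
    then have WR: "W \<in> R" and "\<exists>u\<in>U. \<exists>w\<in>W. {u, w} \<in> edges G" using red_quot by blast+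
    then obtain u w where uw: "u \<in> U" "w \<in> W" "{u, w} \<in> edges G" by blast
    obtain i where i: "i < 2 * ?L" "u = (f ^^ i) a0" using Uform[OF uw(1)] by blast
    have wV: "w \<in> verts G" using edge_in(2)[OF uw(3)] .
    obtain w' where w': "w' \<in> verts G" "(f ^^ i) w' = w" using surjn[OF wV] by blast
    have "{(f ^^ i) a0, (f ^^ i) w'} \<in> edges G" using uw(3) i(2) w'(2) by simp
    then have "{a0, w'} \<in> edges G" using edge_shift[OF a0V w'(1)] by simp
    then have "w' \<in> nbr a0" unfolding nbr_def by simp
    moreover have "W \<in> ?T w'" using WR i(1) w'(2) uw(2) by blast
    ultimately show "W \<in> (\<Union>w\<in>nbr a0. ?T w)" by blast
  qed
  have finR: "finite R" using partition_finite[OF finV R(1)] .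
  have "red_degree (quotient G R) U = card ?NB" unfolding red_degree_def ..
  also have "\<dots> \<le> card (\<Union>w\<in>nbr a0. ?T w)"
    by (rule card_mono[OF _ sub]) (use finR nbr_fin in auto)
  also have "\<dots> \<le> (\<Sum>w\<in>nbr a0. card (?T w))" by (rule card_UN_le[OF nbr_fin])
  also have "\<dots> \<le> (\<Sum>w\<in>nbr a0. 4)"
    by (rule sum_mono) (use T_card[OF R(1,2)] nbr_sub in blast)
  also have "\<dots> = 4 * card (nbr a0)" by simp
  also have "\<dots> \<le> 4 * max_degree G" using nbr_card[OF a0V] by simp
  finally show ?thesis .
qed

end

lemma last_app: "Ps \<noteq> [] \<Longrightarrow> Qs \<noteq> [] \<Longrightarrow> last Ps = hd Qs \<Longrightarrow> last (Ps @ tl Qs) = last Qs"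
  by (cases Qs) auto

lemma hd_app: "Ps \<noteq> [] \<Longrightarrow> hd (Ps @ tl Qs) = hd Ps"
  by simp

lemma set_app: "set (Ps @ tl Qs) \<subseteq> set Ps \<union> set Qs"
  by (cases Qs) auto

lemma width_set_fin:
  assumes "\<forall>R\<in>set Ps. finite R"
  shows "finite {red_degree (quotient G P) U | P U. P \<in> set Ps \<and> U \<in> P}"
proof -
  have "{red_degree (quotient G P) U | P U. P \<in> set Ps \<and> U \<in> P} =
        (\<lambda>(P, U). red_degree (quotient G P) U) ` (SIGMA P:set Ps. P)" by auto
  moreover have "finite (SIGMA P:set Ps. P)" using assms by (intro finite_SigmaI) auto
  ultimately show ?thesis by simp
qed

lemma width_le:
  assumes "\<forall>R\<in>set Ps. finite R \<and> (\<forall>U\<in>R. red_degree (quotient G R) U \<le> c)"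
  shows "width G Ps \<le> c"
proof -
  have f: "finite {red_degree (quotient G P) U | P U. P \<in> set Ps \<and> U \<in> P}"
    using assms by (intro width_set_fin) blast
  show ?thesis unfolding width_def using f assms by (subst Max_le_iff) auto
qed

lemma width_ge:
  assumes "\<forall>R\<in>set Ps. finite R" "R \<in> set Ps" "U \<in> R"
  shows "red_degree (quotient G R) U \<le> width G Ps"
proof -
  have f: "finite {red_degree (quotient G P) U | P U. P \<in> set Ps \<and> U \<in> P}"
    using assms(1) by (rule width_set_fin)
  show ?thesis unfolding width_def using f assms(2,3) by (intro Max_ge) auto
qed

lemma singleton_part: "is_partition V {{v} | v. v \<in> V}"
  unfolding is_partition_def by auto

lemma pcs_part:
  assumes "partial_contraction_seq G Ps" "R \<in> set Ps"
  shows "is_partition (verts G) R"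
proof -
  have "\<forall>i. i < length Ps \<longrightarrow> is_partition (verts G) (Ps ! i)"
  proof (intro allI)
    fix i show "i < length Ps \<longrightarrow> is_partition (verts G) (Ps ! i)"
    proof (induction i)
      case 0
      have "Ps \<noteq> []" using assms(1) unfolding partial_contraction_seq_def by simp
      then have "Ps ! 0 = hd Ps" by (metis hd_conv_nth)
      then show ?case using assms(1) singleton_part unfolding partial_contraction_seq_def singleton_partition_def
        by simp
    next
      case (Suc i)
      show ?case
      proof
        assume "Suc i < length Ps"
        then have p: "is_partition (verts G) (Ps ! i)" and m: "merge_step (Ps ! i) (Ps ! Suc i)"
          using Suc assms(1) unfolding partial_contraction_seq_def by auto
        from m obtain U W where "U \<in> Ps ! i" "W \<in> Ps ! i" "U \<noteq> W"
          "Ps ! Suc i = (Ps ! i - {U, W}) \<union> {U \<union> W}" unfolding merge_step_def by blast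
        then show "is_partition (verts G) (Ps ! Suc i)" using merge_partition[OF p] by simp
      qed
    qed
  qed
  then show ?thesis using assms(2) by (metis in_set_conv_nth)
qed

lemma red_iff: "{U, W} \<in> red (quotient G R) \<longleftrightarrow> U \<in> R \<and> W \<in> R \<and> U \<noteq> W \<and>
   (\<exists>u\<in>U. \<exists>w\<in>W. {u, w} \<in> edges G) \<and> \<not> (\<forall>u\<in>U. \<forall>w\<in>W. {u, w} \<in> black G)"
  (is "?L \<longleftrightarrow> ?R")
proof
  assume ?L
  then obtain U' W' where e: "{U, W} = {U', W'}" "U' \<in> R" "W' \<in> R" "U' \<noteq> W'"
    "\<exists>u\<in>U'. \<exists>w\<in>W'. {u, w} \<in> edges G" "\<not> (\<forall>u\<in>U'. \<forall>w\<in>W'. {u, w} \<in> black G)"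
    unfolding red_def quotient_def by auto
  from e(1) have "(U = U' \<and> W = W') \<or> (U = W' \<and> W = U')" by (auto simp: doubleton_eq_iff)
  then show ?R
  proof
    assume "U = U' \<and> W = W'" then show ?R using e by blast
  next
    assume h: "U = W' \<and> W = U'"
    from e(5) obtain u w where uw: "u \<in> U'" "w \<in> W'" "{u, w} \<in> edges G" by blast
    have 1: "\<exists>u\<in>U. \<exists>w\<in>W. {u, w} \<in> edges G" using uw h by (metis insert_commute)
    from e(6) obtain u w where uw: "u \<in> U'" "w \<in> W'" "{u, w} \<notin> black G" by blast
    have 2: "\<not> (\<forall>u\<in>U. \<forall>w\<in>W. {u, w} \<in> black G)" using uw h by (metis insert_commute)
    show ?R using 1 2 h e(2-4) by simp
  qed
next
  assume ?R then show ?L unfolding red_def quotient_def by auto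
qed

lemma black_iff: "{U, W} \<in> black (quotient G R) \<longleftrightarrow> U \<in> R \<and> W \<in> R \<and> U \<noteq> W \<and>
   (\<forall>u\<in>U. \<forall>w\<in>W. {u, w} \<in> black G)"
  (is "?L \<longleftrightarrow> ?R")
proof
  assume ?L
  then obtain U' W' where e: "{U, W} = {U', W'}" "U' \<in> R" "W' \<in> R" "U' \<noteq> W'"
    "\<forall>u\<in>U'. \<forall>w\<in>W'. {u, w} \<in> black G"
    unfolding black_def quotient_def by auto
  from e(1) have "(U = U' \<and> W = W') \<or> (U = W' \<and> W = U')" by (auto simp: doubleton_eq_iff)
  then show ?R
  proof
    assume "U = U' \<and> W = W'" then show ?R using e by blast
  next
    assume h: "U = W' \<and> W = U'"
    have 2: "\<forall>u\<in>U. \<forall>w\<in>W. {u, w} \<in> black G" using e(5) h by (metis insert_commute)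
    show ?R using 2 h e(2-4) by simp
  qed
next
  assume ?R then show ?L unfolding black_def quotient_def by auto
qed

lemma edges_iff:
  assumes "\<forall>U\<in>R. U \<noteq> {}"
  shows "{U, W} \<in> edges (quotient G R) \<longleftrightarrow> U \<in> R \<and> W \<in> R \<and> U \<noteq> W \<and>
   (\<exists>u\<in>U. \<exists>w\<in>W. {u, w} \<in> edges G)"
proof -
  let ?B = "\<forall>u\<in>U. \<forall>w\<in>W. {u, w} \<in> black G"
  let ?E = "\<exists>u\<in>U. \<exists>w\<in>W. {u, w} \<in> edges G"
  have imp: "?B \<longrightarrow> ?E" if UR: "U \<in> R" and WR: "W \<in> R"
  proof
    assume b: ?B
    have "U \<noteq> {}" "W \<noteq> {}" using assms UR WR by auto
    then obtain u w where u: "u \<in> U" and w: "w \<in> W" by blast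
    then have "{u, w} \<in> edges G" using b unfolding edges_def by blast
    then show ?E using u w by blast
  qed
  have "{U, W} \<in> edges (quotient G R) \<longleftrightarrow> {U, W} \<in> black (quotient G R) \<or> {U, W} \<in> red (quotient G R)"
    unfolding edges_def by simp
  also have "\<dots> \<longleftrightarrow> (U \<in> R \<and> W \<in> R \<and> U \<noteq> W \<and> ?B) \<or> (U \<in> R \<and> W \<in> R \<and> U \<noteq> W \<and> ?E \<and> \<not> ?B)"
    unfolding black_iff red_iff ..
  also have "\<dots> \<longleftrightarrow> U \<in> R \<and> W \<in> R \<and> U \<noteq> W \<and> ?E"
    using imp by meson
  finally show ?thesis .
qed

lemma flat_inj:
  assumes "is_partition V Q" "is_partition Q PP"
  shows "inj_on Union PP"
proof (rule inj_onI)
  fix X Y assume X: "X \<in> PP" and Y: "Y \<in> PP" and e: "\<Union>X = \<Union>Y"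
  obtain A1 where A1: "A1 \<in> X" using part_ne[OF assms(2) X] by blast
  have OQ: "A1 \<in> Q" using part_sub[OF assms(2) X] A1 by blast
  obtain a where a: "a \<in> A1" using part_ne[OF assms(1) OQ] by blast
  then have "a \<in> \<Union>Y" using e A1 by blast
  then obtain A2 where A2: "A2 \<in> Y" "a \<in> A2" by blast
  have "A2 \<in> Q" using part_sub[OF assms(2) Y] A2 by blast
  then have "A1 = A2" using partition_part_unique[OF assms(1) OQ _ a A2(2)] by simp
  then show "X = Y" using partition_part_unique[OF assms(2) X Y A1] A2 by simp
qed

lemma flat_red:
  assumes Q: "is_partition V Q" and PP: "is_partition Q PP" and X: "X \<in> PP" and Y: "Y \<in> PP"
  shows "{\<Union>X, \<Union>Y} \<in> red (quotient G (Union ` PP)) \<longleftrightarrow> {X, Y} \<in> red (quotient (quotient G Q) PP)"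
proof (cases "X = Y")
  case True
  then show ?thesis unfolding red_iff by simp
next
  case False
  have inj: "inj_on Union PP" using flat_inj[OF Q PP] .
  then have ne: "\<Union>X \<noteq> \<Union>Y" using False X Y by (meson inj_onD)
  have neQ: "\<forall>U\<in>Q. U \<noteq> {}" using part_ne[OF Q] by blast
  have dist: "A1 \<noteq> A2" if "A1 \<in> X" "A2 \<in> Y" for A1 A2
    using partition_part_unique[OF PP X Y] that False by blast
  have XQ: "X \<subseteq> Q" and YQ: "Y \<subseteq> Q" using part_sub[OF PP] X Y by auto
  have e1: "(\<exists>A1\<in>X. \<exists>A2\<in>Y. {A1, A2} \<in> edges (quotient G Q)) \<longleftrightarrow> (\<exists>u\<in>\<Union>X. \<exists>w\<in>\<Union>Y. {u, w} \<in> edges G)"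
  proof -
    have "{A1, A2} \<in> edges (quotient G Q) \<longleftrightarrow> (\<exists>u\<in>A1. \<exists>w\<in>A2. {u, w} \<in> edges G)"
      if "A1 \<in> X" "A2 \<in> Y" for A1 A2
      using edges_iff[OF neQ, of A1 A2 G] dist[OF that] XQ YQ that by blast
    then show ?thesis by blast
  qed
  have e2: "(\<forall>A1\<in>X. \<forall>A2\<in>Y. {A1, A2} \<in> black (quotient G Q)) \<longleftrightarrow> (\<forall>u\<in>\<Union>X. \<forall>w\<in>\<Union>Y. {u, w} \<in> black G)"
  proof -
    have "{A1, A2} \<in> black (quotient G Q) \<longleftrightarrow> (\<forall>u\<in>A1. \<forall>w\<in>A2. {u, w} \<in> black G)"
      if "A1 \<in> X" "A2 \<in> Y" for A1 A2
      using black_iff[of A1 A2 G Q] dist[OF that] XQ YQ that by blast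
    then show ?thesis by blast
  qed
  show ?thesis unfolding red_iff using e1 e2 ne False X Y by blast
qed

lemma flat_red_degree:
  assumes Q: "is_partition V Q" and PP: "is_partition Q PP" and X: "X \<in> PP"
  shows "red_degree (quotient G (Union ` PP)) (\<Union>X) = red_degree (quotient (quotient G Q) PP) X"
proof -
  let ?NG = "{W. {\<Union>X, W} \<in> red (quotient G (Union ` PP))}"
  let ?NH = "{Y. {X, Y} \<in> red (quotient (quotient G Q) PP)}"
  have sub: "?NH \<subseteq> PP" unfolding red_iff by blast
  have "?NG = Union ` ?NH"
  proof
    show "?NG \<subseteq> Union ` ?NH"
    proof
      fix W assume "W \<in> ?NG"
      then have W: "W \<in> Union ` PP" "{\<Union>X, W} \<in> red (quotient G (Union ` PP))" unfolding red_iff by auto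
      then obtain Y where Y: "Y \<in> PP" "W = \<Union>Y" by blast
      then have "Y \<in> ?NH" using flat_red[OF Q PP X Y(1)] W(2) by simp
      then show "W \<in> Union ` ?NH" using Y by blast
    qed
  next
    show "Union ` ?NH \<subseteq> ?NG"
    proof
      fix W assume "W \<in> Union ` ?NH"
      then obtain Y where Y: "Y \<in> ?NH" "W = \<Union>Y" by blast
      then have "Y \<in> PP" using sub by blast
      then show "W \<in> ?NG" using flat_red[OF Q PP X] Y by simp
    qed
  qed
  moreover have "inj_on Union ?NH" using inj_on_subset[OF flat_inj[OF Q PP] sub] .
  ultimately show ?thesis unfolding red_degree_def by (simp add: card_image)
qed

lemma flat_merge:
  assumes Q: "is_partition V Q" and PP: "is_partition Q PP" and m: "merge_step PP PP'"
  shows "merge_step (Union ` PP) (Union ` PP')"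
proof -
  obtain X Y where XY: "X \<in> PP" "Y \<in> PP" "X \<noteq> Y" "PP' = (PP - {X, Y}) \<union> {X \<union> Y}"
    using m unfolding merge_step_def by blast
  have inj: "inj_on Union PP" using flat_inj[OF Q PP] .
  then have ne: "\<Union>X \<noteq> \<Union>Y" using XY by (meson inj_onD)
  have "Union ` (PP - {X, Y}) = Union ` PP - Union ` {X, Y}"
    by (rule inj_on_image_set_diff[OF inj]) (use XY in auto)
  then have "Union ` PP' = (Union ` PP - {\<Union>X, \<Union>Y}) \<union> {\<Union>X \<union> \<Union>Y}" using XY(4) by simp
  then have g: "\<Union>X \<noteq> \<Union>Y \<and> Union ` PP' = (Union ` PP - {\<Union>X, \<Union>Y}) \<union> {\<Union>X \<union> \<Union>Y}"
    using ne by simp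
  have m1: "\<Union>X \<in> Union ` PP" and m2: "\<Union>Y \<in> Union ` PP" using XY(1,2) by simp_all
  show ?thesis unfolding merge_step_def
    apply (rule bexI[where x="\<Union>X"], rule bexI[where x="\<Union>Y"])
      apply (rule g)
     apply (rule m2)
    apply (rule m1)
    done
qed

context autG
begin

lemma chain_levels:
  "\<exists>Ps. Ps \<noteq> [] \<and> hd Ps = lvl 0 \<and> last Ps = lvl j \<and> chain Ps \<and>
     (\<forall>R\<in>set Ps. is_partition (verts G) R \<and> (\<forall>U\<in>R. red_degree (quotient G R) U \<le> 4 * max_degree G))"
proof (induction j)
  case 0
  have "chain [lvl 0]" by (simp add: chain_def)
  moreover have "\<forall>U\<in>lvl 0. red_degree (quotient G (lvl 0)) U \<le> 4 * max_degree G"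
    using red_bound[OF lvl_part refines_refl lvl_ref] by blast
  ultimately show ?case using lvl_part by (intro exI[of _ "[lvl 0]"]) simp
next
  case (Suc j)
  then obtain Ps where Ps: "Ps \<noteq> []" "hd Ps = lvl 0" "last Ps = lvl j" "chain Ps"
    "\<forall>R\<in>set Ps. is_partition (verts G) R \<and> (\<forall>U\<in>R. red_degree (quotient G R) U \<le> 4 * max_degree G)"
    by blast
  obtain Qs where Qs: "Qs \<noteq> []" "hd Qs = lvl j" "last Qs = lvl (Suc j)" "chain Qs"
    "\<forall>R\<in>set Qs. is_partition (verts G) R \<and> refines (lvl j) R \<and> refines R (lvl (Suc j))"
    using merge_path[OF finV lvl_part lvl_part lvl_ref] by blast
  have ch: "chain (Ps @ tl Qs)" using chain_append[OF Ps(4) Qs(4) Ps(1) Qs(1)] Ps(3) Qs(2) by simp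
  have la: "last (Ps @ tl Qs) = lvl (Suc j)" using last_app[OF Ps(1) Qs(1)] Ps(3) Qs(2,3) by simp
  have hd: "hd (Ps @ tl Qs) = lvl 0" using Ps(1,2) by simp
  have all: "\<forall>R\<in>set (Ps @ tl Qs). is_partition (verts G) R \<and> (\<forall>U\<in>R. red_degree (quotient G R) U \<le> 4 * max_degree G)"
  proof
    fix R assume "R \<in> set (Ps @ tl Qs)"
    then have "R \<in> set Ps \<or> R \<in> set Qs" using set_app[of Ps Qs] by blast
    then show "is_partition (verts G) R \<and> (\<forall>U\<in>R. red_degree (quotient G R) U \<le> 4 * max_degree G)"
    proof
      assume "R \<in> set Ps" then show ?thesis using Ps(5) by blast
    next
      assume "R \<in> set Qs"
      then have "is_partition (verts G) R" "refines (lvl j) R" "refines R (lvl (Suc j))" using Qs(5) by auto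
      then show ?thesis using red_bound by blast
    qed
  qed
  show ?case using ch la hd all Ps(1) by (intro exI[of _ "Ps @ tl Qs"]) simp
qed

end

lemma pcs_intro: "Ps \<noteq> [] \<Longrightarrow> hd Ps = singleton_partition G \<Longrightarrow> chain Ps \<Longrightarrow> partial_contraction_seq G Ps"
  unfolding partial_contraction_seq_def chain_def by simp

lemma tww_le: "contraction_seq G Ps \<Longrightarrow> tww G \<le> width G Ps"
  unfolding tww_def Inf_nat_def by (rule Least_le) blast

theorem mainTheorem14:
  fixes G :: "'a trigraph" and \<phi> :: "'a \<Rightarrow> 'a"
  assumes "trigraph G" and "is_aut G \<phi>"
  shows "(\<exists>Ps. partial_contraction_seq G Ps \<and> width G Ps \<le> 4 * max_degree G \<and>
             last Ps = orbit_partition G \<phi>)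
       \<and> tww G \<le> max (4 * max_degree G) (tww (quotient G (orbit_partition G \<phi>)))"
proof -
  interpret autG G \<phi> using assms by unfold_locales
  define J where "J = Max (insert 0 (idx ` verts G))"
  have J: "\<forall>v\<in>verts G. idx v < 2 ^ J"
  proof
    fix v assume "v \<in> verts G"
    then have "idx v \<le> J" unfolding J_def using finV by (intro Max_ge) auto
    also have "J < 2 ^ J" by (rule less_exp)
    finally show "idx v < 2 ^ J" .
  qed
  let ?Q = "orbit_partition G \<phi>"
  have QJ: "lvl J = ?Q" using lvlJ[OF J] unfolding orbit_partition_def .
  have L0: "lvl 0 = singleton_partition G" using lvl0 unfolding singleton_partition_def .
  obtain Ps where Ps: "Ps \<noteq> []" "hd Ps = lvl 0" "last Ps = lvl J" "chain Ps"
    "\<forall>R\<in>set Ps. is_partition (verts G) R \<and> (\<forall>U\<in>R. red_degree (quotient G R) U \<le> 4 * max_degree G)"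
    using chain_levels[of J] by blast
  have pcs: "partial_contraction_seq G Ps" using pcs_intro[OF Ps(1) _ Ps(4)] Ps(2) L0 by simp
  have wPs: "width G Ps \<le> 4 * max_degree G"
    using Ps(5) partition_finite[OF finV] by (intro width_le) blast
  have part1: "\<exists>Ps. partial_contraction_seq G Ps \<and> width G Ps \<le> 4 * max_degree G \<and> last Ps = ?Q"
    using pcs wPs Ps(3) QJ by blast
  have Qpart: "is_partition (verts G) ?Q" using lvl_part[of J] QJ by simp
  have finQ: "finite ?Q" using partition_finite[OF finV Qpart] .
  let ?H = "quotient G ?Q"
  have vH: "verts ?H = ?Q" unfolding verts_def quotient_def by simp
  have part2: "tww G \<le> max (4 * max_degree G) (tww ?H)"
  proof (cases "?Q = {}")
    case True
    then have V0: "verts G = {}" using QJ unfolding lvl_def by simp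
    have noseq: "\<not> contraction_seq K Ks" if "verts K = {}" for K :: "'b trigraph" and Ks
    proof
      assume c: "contraction_seq K Ks"
      then have "Ks \<noteq> []" unfolding contraction_seq_def partial_contraction_seq_def by simp
      then have "last Ks \<in> set Ks" by simp
      then have "is_partition {} (last Ks)" using pcs_part[of K Ks] c that
        unfolding contraction_seq_def by simp
      then have "\<forall>U\<in>last Ks. U \<noteq> {} \<and> U \<subseteq> {}" unfolding is_partition_def by simp
      then have "last Ks = {}" by auto
      then show False using c unfolding contraction_seq_def by simp
    qed
    have "{width G Ps |Ps. contraction_seq G Ps} = {}" using noseq[OF V0] by blast
    moreover have "{width ?H Ps |Ps. contraction_seq ?H Ps} = {}" using noseq[of ?H] vH True by blast
    ultimately have "tww G = tww ?H" unfolding tww_def by simp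
    then show ?thesis by simp
  next
    case False
    let ?S1 = "{{A} | A. A \<in> ?Q}"
    have sH: "singleton_partition ?H = ?S1" unfolding singleton_partition_def vH ..
    have p1: "is_partition ?Q ?S1" by (rule singleton_part)
    have p2: "is_partition ?Q {?Q}" using False unfolding is_partition_def by auto
    have r12: "refines ?S1 {?Q}" unfolding refines_def by auto
    obtain Qs0 where Qs0: "Qs0 \<noteq> []" "hd Qs0 = ?S1" "last Qs0 = {?Q}" "chain Qs0"
      using merge_path[OF finQ p1 p2 r12] by blast
    have "contraction_seq ?H Qs0" unfolding contraction_seq_def
      using pcs_intro[OF Qs0(1) _ Qs0(4)] Qs0(2,3) sH by simp
    then have ne: "{width ?H Ps |Ps. contraction_seq ?H Ps} \<noteq> {}" by blast
    have "tww ?H \<in> {width ?H Ps |Ps. contraction_seq ?H Ps}"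
      unfolding tww_def by (rule Inf_nat_def1[OF ne])
    then obtain Qs where Qs: "contraction_seq ?H Qs" "tww ?H = width ?H Qs" by blast
    have Qs1: "Qs \<noteq> []" "hd Qs = ?S1" "chain Qs" "card (last Qs) = 1"
      using Qs(1) sH unfolding contraction_seq_def partial_contraction_seq_def chain_def by auto
    have QsP: "\<forall>PP\<in>set Qs. is_partition ?Q PP"
      using pcs_part[of ?H Qs] Qs(1) vH unfolding contraction_seq_def by simp
    have QsF: "\<forall>PP\<in>set Qs. finite PP" using QsP partition_finite[OF finQ] by blast
    define Qs' where "Qs' = map ((`) Union) Qs"
    have Qs'1: "Qs' \<noteq> []" unfolding Qs'_def using Qs1(1) by simp
    have hQs': "hd Qs' = ?Q"
    proof -
      have "hd Qs' = Union ` ?S1" unfolding Qs'_def using Qs1(1,2) by (simp add: hd_map)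
      also have "\<dots> = ?Q" by auto
      finally show ?thesis .
    qed
    have chQs': "chain Qs'"
    proof -
      have "successively merge_step Qs" using Qs1(3) unfolding chain_succ .
      then have "successively (\<lambda>x y. merge_step (Union ` x) (Union ` y)) Qs"
        by (rule successively_mono) (use flat_merge[OF Qpart] QsP in blast)
      then show ?thesis unfolding chain_succ Qs'_def successively_map .
    qed
    define Full where "Full = Ps @ tl Qs'"
    have chF: "chain Full" unfolding Full_def
      using chain_append[OF Ps(4) chQs' Ps(1) Qs'1] Ps(3) QJ hQs' by simp
    have pcsF: "partial_contraction_seq G Full"
      using pcs_intro[OF _ _ chF] Ps(1,2) L0 unfolding Full_def by simp
    have lF: "last Full = Union ` last Qs"
      unfolding Full_def using last_app[OF Ps(1) Qs'1] Ps(3) QJ hQs' Qs1(1)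
      by (simp add: Qs'_def last_map)
    have "last Qs \<in> set Qs" using Qs1(1) by simp
    then have "inj_on Union (last Qs)" using flat_inj[OF Qpart] QsP by blast
    then have "card (last Full) = 1" using lF Qs1(4) by (simp add: card_image)
    then have cF: "contraction_seq G Full" using pcsF unfolding contraction_seq_def by simp
    have wF: "width G Full \<le> max (4 * max_degree G) (tww ?H)"
    proof (rule width_le, intro ballI)
      fix R assume R: "R \<in> set Full"
      then have "R \<in> set Ps \<or> R \<in> set Qs'" unfolding Full_def using set_app[of Ps Qs'] by blast
      then show "finite R \<and> (\<forall>U\<in>R. red_degree (quotient G R) U \<le> max (4 * max_degree G) (tww ?H))"
      proof
        assume "R \<in> set Ps"
        then show ?thesis using Ps(5) partition_finite[OF finV] by fastforce
      next
        assume "R \<in> set Qs'"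
        then obtain PP where PP: "PP \<in> set Qs" "R = Union ` PP" unfolding Qs'_def by auto
        have fR: "finite R" using PP QsF by simp
        have "red_degree (quotient G R) U \<le> tww ?H" if U: "U \<in> R" for U
        proof -
          obtain X where X: "X \<in> PP" "U = \<Union>X" using U PP(2) by blast
          have "red_degree (quotient G R) U = red_degree (quotient ?H PP) X"
            using flat_red_degree[OF Qpart _ X(1)] QsP PP X(2) by simp
          also have "\<dots> \<le> width ?H Qs" by (rule width_ge[OF QsF PP(1) X(1)])
          finally show ?thesis using Qs(2) by simp
        qed
        then show ?thesis using fR by fastforce
      qed
    qed
    have "tww G \<le> width G Full" by (rule tww_le[OF cF])
    then show ?thesis using wF by simp
  qed
  show ?thesis using part1 part2 by blast
qed

end
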